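(* Fix $0<q<1$ and $0<p<2$, and let $T_q^*(\eta;p)=\inf_{G\in\mathcal G_p(\eta)}T_q(G)$. Then as $\eta\to0$, $$T_q^*(\eta;p)=p\Big(\log\frac1\eta+\log\log\log\frac1\eta\Big)+\log\Big(\frac{1-q}{q}\Big)+o(1).$$
   Context: $E(t)=1-e^{-t}$, $\bar E=1-E$, $\bar G=1-G$. For a probability distribution $F$ on $[1,\infty)$, $(E\#F)(t)=\int E(t/\mu)\,dF(\mu)$. $\mathcal G_p(\eta)=\{E\#F:F$ on $[1,\infty)$, $\int\log^p(\mu)\,dF(\mu)\le\eta^p\}$. FDR functional $T_q(G)=\inf\{t:\bar G(t)\ge\frac1q\bar E(t)\}$ (with $\inf\emptyset=+\infty$). *)

theory Defs
  imports "HOL-Probability.Probability"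
begin

definition Eexp :: "real \<Rightarrow> real" where
  "Eexp t = 1 - exp (- t)"

definition distr_on_1_inf :: "real measure \<Rightarrow> bool" where
  "distr_on_1_inf F \<longleftrightarrow> prob_space F \<and> sets F = sets borel \<and> emeasure F {1..} = 1"

definition mixE :: "real measure \<Rightarrow> real \<Rightarrow> real" where
  "mixE F t = (\<integral>\<mu>. Eexp (t / \<mu>) \<partial>F)"

definition Gclass :: "real \<Rightarrow> real \<Rightarrow> (real \<Rightarrow> real) set" where
  "Gclass p \<eta> = {mixE F | F. distr_on_1_inf F \<and>
       (\<integral>\<^sup>+ \<mu>. ennreal (ln \<mu> powr p) \<partial>F) \<le> ennreal (\<eta> powr p)}"

text \<open>FDR functional T_q(G) = inf {t >= 0. 1 - G t >= (1/q)(1 - E t)}, with inf of empty = +infinity.\<close>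
definition Tq :: "real \<Rightarrow> (real \<Rightarrow> real) \<Rightarrow> ereal" where
  "Tq q G = Inf {ereal t | t. t \<ge> 0 \<and> 1 - G t \<ge> (1 / q) * (1 - Eexp t)}"

definition Tstar :: "real \<Rightarrow> real \<Rightarrow> real \<Rightarrow> ereal" where
  "Tstar q p \<eta> = (INF G \<in> Gclass p \<eta>. Tq q G)"

end

theory Submission
  imports Defs "HOL-Real_Asymp.Real_Asymp"
begin
lemma key_lower:
  fixes p L T x :: real
  assumes p: "p > 0" and L1: "L > 1" and l4: "ln L \<ge> 4" and T: "T \<ge> p * L / 2"
    and big: "ln (ln L) + 2 * ln L \<le> sqrt L / 2" and x: "x \<ge> 1 / L^2"
  shows "p * ln (ln L) \<le> T * exp (- x) + p * ln x"
proof -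
  define l where "l = ln L"
  have l0: "l > 0" using L1 l_def by simp
  have xpos: "x > 0" using x L1 by (smt (verit) divide_pos_pos zero_less_power)
  have eL: "exp l = L" using L1 l_def by simp
  have Tpos: "T > 0" using T p L1 by (smt (verit) divide_pos_pos mult_pos_pos)
  consider "x \<ge> l" | "l / 2 \<le> x \<and> x \<le> l" | "x \<le> l / 2" by linarith
  then show ?thesis
  proof cases
    case 1
    have "ln l \<le> ln x" using 1 l0 by simp
    moreover have "T * exp (-x) \<ge> 0" using Tpos by simp
    ultimately show ?thesis using p l_def by (smt (verit) mult_left_mono)
  next
    case 2
    have "ln l - ln x = ln (l / x)" using l0 xpos by (simp add: ln_div)
    also have "\<dots> \<le> l / x - 1" using l0 xpos by (intro ln_le_minus_one) simp
    also have "\<dots> = (l - x) / x" using xpos by (simp add: field_simps)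
    also have "\<dots> \<le> (l - x) / (l / 2)" using 2 l0 by (intro divide_left_mono) auto
    also have "\<dots> \<le> (l - x) / 2" using 2 l4 l_def by (intro divide_left_mono) auto
    finally have A: "ln l - ln x \<le> (l - x) / 2" .
    have ex: "exp x * exp (l - x) = L" using eL by (simp flip: exp_add)
    have "exp (-x) = exp (l - x) / L" using L1 by (simp add: exp_minus field_simps flip: ex)
    then have "T * exp (-x) = (T / L) * exp (l - x)" by simp
    also have "\<dots> \<ge> (p / 2) * (1 + (l - x))"
    proof (rule mult_mono)
      show "p / 2 \<le> T / L" using T L1 by (simp add: field_simps)
      show "1 + (l - x) \<le> exp (l - x)" by (rule exp_ge_add_one_self)
    qed (use Tpos L1 2 in auto)
    finally have B: "T * exp (-x) \<ge> (p / 2) * (1 + (l - x))" .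
    have "p * (ln l - ln x) \<le> p * ((l - x) / 2)" using A p by (intro mult_left_mono) auto
    then show ?thesis using B p l_def by (simp add: algebra_simps)
  next
    case 3
    have "ln x \<ge> ln (1 / L^2)" using x xpos L1 by (subst ln_le_cancel_iff) auto
    also have "ln (1 / L^2) = - 2 * l" using L1 l_def by (simp add: ln_div ln_realpow)
    finally have A: "ln x \<ge> - 2 * l" .
    have sq: "exp (l / 2) = sqrt L"
    proof -
      have "exp (l / 2) ^ 2 = L" using eL by (simp add: power2_eq_square flip: exp_add)
      then show ?thesis by (metis exp_ge_zero real_sqrt_abs abs_of_nonneg real_sqrt_power power2_eq_square)
    qed
    have "T * exp (-x) \<ge> T * exp (- (l / 2))" using 3 Tpos by (intro mult_left_mono) auto
    also have "T * exp (- (l / 2)) = T / sqrt L" using sq by (simp add: exp_minus field_simps)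
    also have "T / sqrt L \<ge> p * sqrt L / 2"
    proof -
      have sL: "sqrt L > 0" using L1 by simp
      have "p * sqrt L / 2 = (p * L / 2) / sqrt L" using sL L1 by (simp add: field_simps)
      also have "\<dots> \<le> T / sqrt L" using T sL by (intro divide_right_mono) auto
      finally show ?thesis .
    qed
    finally have B: "T * exp (-x) \<ge> p * sqrt L / 2" by simp
    have "p * (ln l + 2 * l) \<le> p * (sqrt L / 2)" using big p l_def by (intro mult_left_mono) auto
    moreover have "p * ln x \<ge> p * (- 2 * l)" using A p by (intro mult_left_mono) auto
    ultimately show ?thesis using B l_def by (simp add: algebra_simps)
  qed
qed


lemma lower_pointwise:
  fixes p L T t r eps mu :: real
  assumes p: "p > 0" and L1: "L > 1" and l4: "ln L \<ge> 4" and T: "T \<ge> p * L / 2"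
    and big: "ln (ln L) + 2 * ln L \<le> sqrt L / 2"
    and r: "r > 0" and Tdef: "T = p * L + p * ln (ln L) + ln r - eps"
    and t: "0 \<le> t" "t \<le> T" and mu: "mu \<ge> 1"
  shows "exp (t - t / mu) \<le> exp (T / L^2) + r * exp (- eps) * exp (p * L) * (ln mu powr p)"
proof -
  define x where "x = ln mu"
  have x0: "x \<ge> 0" using mu x_def by simp
  have emx: "exp (- x) = 1 / mu" using mu x_def by (simp add: exp_minus inverse_eq_divide)
  have d0: "0 \<le> 1 - exp (- x)" using x0 by simp
  have "t - t / mu = t * (1 - exp (- x))" using emx by (simp add: algebra_simps)
  also have "\<dots> \<le> T * (1 - exp (- x))" using t d0 by (intro mult_right_mono) auto
  finally have st: "t - t / mu \<le> T * (1 - exp (- x))" .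
  have Tpos: "T > 0" using T p L1 by (smt (verit) divide_pos_pos mult_pos_pos)
  have nn: "0 \<le> r * exp (- eps) * exp (p * L) * (ln mu powr p)" using r by simp
  show ?thesis
  proof (cases "x \<le> 1 / L^2")
    case True
    have "1 - exp (- x) \<le> x" using exp_ge_add_one_self[of "-x"] by simp
    then have "T * (1 - exp (- x)) \<le> T * (1 / L^2)" using True Tpos
      by (smt (verit) mult_left_mono)
    then have "exp (t - t / mu) \<le> exp (T / L^2)" using st by simp
    then show ?thesis using nn by linarith
  next
    case False
    then have xg: "x \<ge> 1 / L^2" by simp
    have xpos: "x > 0" using xg L1 by (smt (verit) divide_pos_pos zero_less_power)
    have k: "p * ln (ln L) \<le> T * exp (- x) + p * ln x"
      by (rule key_lower[OF p L1 l4 T big xg])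
    have "t - t / mu \<le> p * L + ln r - eps + p * ln x" using st k Tdef by (simp add: algebra_simps)
    then have "exp (t - t / mu) \<le> exp (p * L + ln r - eps + p * ln x)" by simp
    also have "\<dots> = r * exp (- eps) * exp (p * L) * (ln mu powr p)"
      using r xpos x_def by (simp add: exp_add exp_diff powr_def exp_minus field_simps)
    finally show ?thesis by (smt (verit) exp_gt_zero)
  qed
qed


lemma upper_real:
  fixes p L t r eps :: real
  assumes p: "p > 0" and r: "r > 0" and e: "eps > 0" and l1: "ln L \<ge> 1" and L1: "L > 1"
    and tdef: "t = p * L + p * ln (ln L) + ln r + eps"
    and t2: "t \<le> 2 * p * L"
    and small: "p * (ln (ln L) + 2) / ln L \<le> eps / 2"
    and wsmall: "exp (- (p * L)) \<le> r * (exp (eps / 2) - 1)"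
  shows "exp (- (p * L)) / (ln L + ln (ln L)) powr p * (exp (t - t * exp (- (ln L + ln (ln L)))) - 1) \<ge> r"
proof -
  define l where "l = ln L"
  define x where "x = l + ln l"
  have l0: "l \<ge> 1" using l1 l_def by simp
  have L0: "L > 0" using L1 by simp
  have lnl0: "ln l \<ge> 0" using l0 by simp
  have xl: "x \<ge> l" using lnl0 x_def by simp
  have x1: "x \<ge> 1" using xl l0 by simp
  have expx: "exp x = L * l" using L0 L1 l0 x_def l_def by (simp add: exp_add)
  define w where "w = exp (- (p * L)) / x powr p"
  have xp1: "x powr p \<ge> 1" using x1 p by (simp add: ge_one_powr_ge_zero)
  have w_le: "w \<le> exp (- (p * L))" unfolding w_def using xp1
    by (simp add: divide_le_eq)
  have "ln x - ln l = ln (x / l)" using l0 x1 by (simp add: ln_div)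
  also have "\<dots> \<le> x / l - 1" using l0 x1 by (intro ln_le_minus_one) simp
  also have "\<dots> = ln l / l" using l0 x_def by (simp add: field_simps)
  finally have A: "ln x - ln l \<le> ln l / l" .
  have "t * exp (- x) = t / (L * l)" using expx by (simp add: exp_minus field_simps)
  also have "\<dots> \<le> (2 * p * L) / (L * l)" using t2 L0 l0 by (intro divide_right_mono) auto
  also have "\<dots> = 2 * p / l" using L0 by simp
  finally have B: "t * exp (- x) \<le> 2 * p / l" .
  have "p * (ln x - ln l) + t * exp (- x) \<le> p * (ln l / l) + 2 * p / l"
    using A B p by (smt (verit) mult_left_mono)
  also have "\<dots> = p * (ln l + 2) / l" using l0 by (simp add: field_simps)
  also have "\<dots> \<le> eps / 2" using small l_def by simp
  finally have C: "p * (ln x - ln l) + t * exp (- x) \<le> eps / 2" .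
  have "x powr p = exp (p * ln x)" using x1 by (simp add: powr_def)
  then have wexp: "w = exp (- (p * L) - p * ln x)" unfolding w_def by (simp add: exp_diff)
  have "w * exp (t - t * exp (- x)) = exp ((- (p * L) - p * ln x) + (t - t * exp (- x)))"
    unfolding wexp exp_add ..
  also have "(- (p * L) - p * ln x) + (t - t * exp (- x)) = ln r + (eps - (p * (ln x - ln l) + t * exp (- x)))"
    using tdef l_def by (simp add: algebra_simps)
  also have "exp \<dots> = r * exp (eps - (p * (ln x - ln l) + t * exp (- x)))" using r by (simp add: exp_add)
  also have "\<dots> \<ge> r * exp (eps / 2)" using C r by simp
  finally have D: "w * exp (t - t * exp (- x)) \<ge> r * exp (eps / 2)" .
  have "w * (exp (t - t * exp (- x)) - 1) \<ge> r" using D w_le wsmall by (simp add: algebra_simps)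
  then show ?thesis unfolding w_def x_def l_def .
qed



lemma meas_F:
  assumes "sets F = sets borel" and "f \<in> borel_measurable borel"
  shows "f \<in> borel_measurable F"
  using assms measurable_cong_sets[of F borel borel borel] by simp

lemma lower_measure:
  fixes F :: "real measure" and t A B p eta :: real
  assumes D: "distr_on_1_inf F"
    and mom: "(\<integral>\<^sup>+ \<mu>. ennreal (ln \<mu> powr p) \<partial>F) \<le> ennreal (eta powr p)"
    and B: "B \<ge> 0" and t: "t \<ge> 0"
    and pw: "\<And>\<mu>. \<mu> \<ge> 1 \<Longrightarrow> exp (t - t / \<mu>) \<le> A + B * (ln \<mu> powr p)"
  shows "1 - mixE F t \<le> exp (- t) * (A + B * eta powr p)"
proof -
  have ps: "prob_space F" and sF: "sets F = sets borel" and e1: "emeasure F {1..} = 1"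
    using D by (auto simp: distr_on_1_inf_def)
  interpret prob_space F by (rule ps)
  have ev: "{1..} \<in> sets F" using sF by simp
  have AE1: "AE \<mu> in F. \<mu> \<ge> 1"
  proof -
    have "prob {1..} = 1" using e1 by (simp add: emeasure_eq_measure)
    then have "AE \<mu> in F. \<mu> \<in> {1..}" using AE_in_set_eq_1[OF ev] by simp
    then show ?thesis by simp
  qed
  have m1: "(\<lambda>\<mu>. exp (- t / \<mu>)) \<in> borel_measurable F" by (rule meas_F[OF sF]) measurable
  have m2: "(\<lambda>\<mu>. exp (t - t / \<mu>)) \<in> borel_measurable F" by (rule meas_F[OF sF]) measurable
  have m3: "(\<lambda>\<mu>. ln \<mu> powr p) \<in> borel_measurable F" by (rule meas_F[OF sF]) measurable
  have m4: "(\<lambda>\<mu>. Eexp (t / \<mu>)) \<in> borel_measurable F" unfolding Eexp_def by (rule meas_F[OF sF]) measurable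
  have i1: "integrable F (\<lambda>\<mu>. exp (- t / \<mu>))"
  proof (rule integrable_const_bound[where B=1])
    show "AE \<mu> in F. norm (exp (- t / \<mu>)) \<le> 1" using AE1
    proof eventually_elim
      case (elim \<mu>) then show ?case using t by (simp add: divide_nonneg_nonneg)
    qed
  qed (rule m1)
  have i2: "integrable F (\<lambda>\<mu>. exp (t - t / \<mu>))"
  proof (rule integrable_const_bound[where B="exp t"])
    show "AE \<mu> in F. norm (exp (t - t / \<mu>)) \<le> exp t" using AE1
    proof eventually_elim
      case (elim \<mu>) then show ?case using t by (simp add: divide_nonneg_nonneg)
    qed
  qed (rule m2)
  have fin: "(\<integral>\<^sup>+ \<mu>. ennreal (norm (ln \<mu> powr p)) \<partial>F) < \<infinity>"
    using mom by (simp add: order_le_less_trans)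
  have i3: "integrable F (\<lambda>\<mu>. ln \<mu> powr p)" by (rule integrableI_bounded[OF m3 fin])
  have "ennreal (\<integral>\<mu>. ln \<mu> powr p \<partial>F) = (\<integral>\<^sup>+ \<mu>. ennreal (ln \<mu> powr p) \<partial>F)"
    by (rule nn_integral_eq_integral[symmetric, OF i3]) simp
  also have "\<dots> \<le> ennreal (eta powr p)" by (rule mom)
  finally have I3: "(\<integral>\<mu>. ln \<mu> powr p \<partial>F) \<le> eta powr p" by (simp add: ennreal_le_iff)
  have "mixE F t = (\<integral>\<mu>. 1 - exp (- t / \<mu>) \<partial>F)" unfolding mixE_def Eexp_def by simp
  also have "\<dots> = 1 - (\<integral>\<mu>. exp (- t / \<mu>) \<partial>F)"
  proof -
    have "(\<integral>\<mu>. 1 - exp (- t / \<mu>) \<partial>F) = (\<integral>\<mu>. 1 \<partial>F) - (\<integral>\<mu>. exp (- t / \<mu>) \<partial>F)"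
      by (rule Bochner_Integration.integral_diff[OF _ i1]) simp
    then show ?thesis by (simp add: prob_space)
  qed
  finally have "1 - mixE F t = (\<integral>\<mu>. exp (- t / \<mu>) \<partial>F)" by simp
  also have "\<dots> = (\<integral>\<mu>. exp (- t) * exp (t - t / \<mu>) \<partial>F)"
    by (simp add: mult_exp_exp)
  also have "\<dots> = exp (- t) * (\<integral>\<mu>. exp (t - t / \<mu>) \<partial>F)" by simp
  also have "(\<integral>\<mu>. exp (t - t / \<mu>) \<partial>F) \<le> (\<integral>\<mu>. A + B * (ln \<mu> powr p) \<partial>F)"
  proof (rule integral_mono_AE[OF i2])
    show "integrable F (\<lambda>\<mu>. A + B * (ln \<mu> powr p))" using i3 by simp
    show "AE \<mu> in F. exp (t - t / \<mu>) \<le> A + B * (ln \<mu> powr p)" using AE1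
      by eventually_elim (rule pw)
  qed
  also have "(\<integral>\<mu>. A + B * (ln \<mu> powr p) \<partial>F) = A + B * (\<integral>\<mu>. ln \<mu> powr p \<partial>F)"
  proof -
    have "(\<integral>\<mu>. A + B * (ln \<mu> powr p) \<partial>F) = (\<integral>\<mu>. A \<partial>F) + (\<integral>\<mu>. B * (ln \<mu> powr p) \<partial>F)"
      by (rule Bochner_Integration.integral_add) (use i3 in auto)
    then show ?thesis by (simp add: prob_space)
  qed
  also have "\<dots> \<le> A + B * eta powr p" using I3 B by (simp add: mult_left_mono)
  finally show ?thesis by (simp add: mult_left_mono)
qed

lemma upper_measure:
  fixes w M p t :: real
  assumes w: "0 \<le> w" "w \<le> 1" and M: "M \<ge> 1" and p: "p > 0"
  defines "F \<equiv> distr (measure_pmf (bernoulli_pmf w)) borel (\<lambda>b. if b then M else 1)"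
  shows "distr_on_1_inf F"
    and "(\<integral>\<^sup>+ \<mu>. ennreal (ln \<mu> powr p) \<partial>F) = ennreal (w * ln M powr p)"
    and "mixE F t = w * Eexp (t / M) + (1 - w) * Eexp t"
proof -
  have g: "(\<lambda>b. if b then M else 1) \<in> measurable (measure_pmf (bernoulli_pmf w)) borel" by simp
  show "distr_on_1_inf F" unfolding distr_on_1_inf_def
  proof (intro conjI)
    show "prob_space F" unfolding F_def
      by (rule prob_space.prob_space_distr[OF prob_space_measure_pmf g])
    show "sets F = sets borel" unfolding F_def by simp
    have "emeasure F {1..} = emeasure (measure_pmf (bernoulli_pmf w)) ((\<lambda>b. if b then M else 1) -` {1..} \<inter> space (measure_pmf (bernoulli_pmf w)))"
      unfolding F_def by (rule emeasure_distr[OF g]) simp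
    also have "(\<lambda>b. if b then M else 1) -` {1..} \<inter> space (measure_pmf (bernoulli_pmf w)) = UNIV"
      using M by auto
    also have "emeasure (measure_pmf (bernoulli_pmf w)) UNIV = 1" by simp
    finally show "emeasure F {1..} = 1" .
  qed
  have "(\<integral>\<^sup>+ \<mu>. ennreal (ln \<mu> powr p) \<partial>F) = (\<integral>\<^sup>+ b. ennreal (ln (if b then M else 1) powr p) \<partial>measure_pmf (bernoulli_pmf w))"
    unfolding F_def by (rule nn_integral_distr[OF g]) measurable
  also have "\<dots> = ennreal (w * ln M powr p)" using w
    by (simp add: ennreal_mult' mult.commute)
  finally show "(\<integral>\<^sup>+ \<mu>. ennreal (ln \<mu> powr p) \<partial>F) = ennreal (w * ln M powr p)" .
  have "mixE F t = (\<integral>b. Eexp (t / (if b then M else 1)) \<partial>measure_pmf (bernoulli_pmf w))"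
    unfolding mixE_def F_def by (rule integral_distr[OF g]) (unfold Eexp_def, measurable)
  also have "\<dots> = w * Eexp (t / M) + (1 - w) * Eexp t" using w by simp
  finally show "mixE F t = w * Eexp (t / M) + (1 - w) * Eexp t" .
qed



lemma asym1: "eventually (\<lambda>L::real. ln (ln L) + 2 * ln L \<le> sqrt L / 2) at_top" by real_asymp
lemma asym2: "eventually (\<lambda>L::real. ln (ln L) \<le> L / 2) at_top" by real_asymp
lemma asym3: "((\<lambda>L::real. (ln (ln L) + 2) / ln L) \<longlongrightarrow> 0) at_top" by real_asymp
lemma asym4: "filterlim (\<lambda>\<eta>::real. ln (1 / \<eta>)) at_top (at_right 0)" by real_asymp

lemma ev_conds:
  fixes p r eps :: real
  assumes p: "p > 0" and r: "r > 0" and e: "eps > 0"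
  shows "eventually (\<lambda>L. L > 1 \<and> ln L \<ge> 4 \<and> ln (ln L) + 2 * ln L \<le> sqrt L / 2
      \<and> ln (ln L) \<le> L / 2 \<and> p * L / 2 \<ge> eps - ln r \<and> p * L / 2 \<ge> ln r + eps
      \<and> 2 * p / L < ln (1 + r * (1 - exp (- eps)))
      \<and> p * (ln (ln L) + 2) / ln L \<le> eps / 2
      \<and> exp (- (p * L)) \<le> r * (exp (eps / 2) - 1)) at_top"
proof -
  have k0: "1 - exp (- eps) > 0" using e by simp
  have k: "ln (1 + r * (1 - exp (- eps))) > 0" using r k0 by (simp add: ln_gt_zero)
  have C: "r * (exp (eps / 2) - 1) > 0" using r e by simp
  have e1: "eventually (\<lambda>L::real. L \<ge> exp 4 + 1) at_top" by (rule eventually_ge_at_top)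
  have e2: "eventually (\<lambda>L::real. L \<ge> 2 * (\<bar>eps\<bar> + \<bar>ln r\<bar>) / p + 1) at_top" by (rule eventually_ge_at_top)
  have e3: "eventually (\<lambda>L::real. L \<ge> 2 * p / ln (1 + r * (1 - exp (- eps))) + 1) at_top" by (rule eventually_ge_at_top)
  have e4: "eventually (\<lambda>L::real. (ln (ln L) + 2) / ln L < eps / (2 * p)) at_top"
    using order_tendstoD(2)[OF asym3, of "eps / (2 * p)"] p e by simp
  have e5: "eventually (\<lambda>L::real. L \<ge> \<bar>ln (r * (exp (eps / 2) - 1))\<bar> / p + 1) at_top" by (rule eventually_ge_at_top)
  show ?thesis using e1 e2 e3 e4 e5 asym1 asym2
  proof eventually_elim
    case (elim L)
    have L1: "L > 1" using elim(1) by (smt (verit) exp_gt_zero)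
    have "exp 4 \<le> L" using elim(1) by simp
    then have "ln (exp 4) \<le> ln L" using L1 by (subst ln_le_cancel_iff) auto
    then have l4: "ln L \<ge> 4" by simp
    have a1: "p * L / 2 \<ge> \<bar>eps\<bar> + \<bar>ln r\<bar>"
    proof -
      have "2 * (\<bar>eps\<bar> + \<bar>ln r\<bar>) / p \<le> L" using elim(2) by linarith
      then have "2 * (\<bar>eps\<bar> + \<bar>ln r\<bar>) \<le> L * p" using p by (simp add: divide_le_eq)
      then show ?thesis by (simp add: algebra_simps)
    qed
    have a2: "2 * p / L < ln (1 + r * (1 - exp (- eps)))"
    proof -
      have "2 * p / ln (1 + r * (1 - exp (- eps))) < L" using elim(3) by linarith
      then have "2 * p < L * ln (1 + r * (1 - exp (- eps)))" using k by (simp add: divide_less_eq)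
      then show ?thesis using L1 by (simp add: divide_less_eq mult.commute)
    qed
    have a3: "p * (ln (ln L) + 2) / ln L \<le> eps / 2"
    proof -
      have "(ln (ln L) + 2) / ln L \<le> eps / (2 * p)" using elim(4) by simp
      then have "p * ((ln (ln L) + 2) / ln L) \<le> p * (eps / (2 * p))" using p by (intro mult_left_mono) auto
      then show ?thesis using p by simp
    qed
    have a4: "exp (- (p * L)) \<le> r * (exp (eps / 2) - 1)"
    proof -
      have "\<bar>ln (r * (exp (eps / 2) - 1))\<bar> / p \<le> L" using elim(5) by linarith
      then have "\<bar>ln (r * (exp (eps / 2) - 1))\<bar> \<le> L * p" using p by (simp add: divide_le_eq)
      then have "- (p * L) \<le> ln (r * (exp (eps / 2) - 1))" by (simp add: algebra_simps)
      then have "exp (- (p * L)) \<le> exp (ln (r * (exp (eps / 2) - 1)))" by simp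
      then show ?thesis using C by simp
    qed
    show ?case using L1 l4 elim(6) elim(7) a1 a2 a3 a4 by auto
  qed
qed



lemma bounds:
  fixes q p eps eta :: real
  assumes q: "0 < q" "q < 1" and p: "p > 0" and e: "eps > 0" and eta: "eta > 0"
  defines "L \<equiv> ln (1 / eta)" and "r \<equiv> (1 - q) / q"
  assumes C: "L > 1 \<and> ln L \<ge> 4 \<and> ln (ln L) + 2 * ln L \<le> sqrt L / 2
      \<and> ln (ln L) \<le> L / 2 \<and> p * L / 2 \<ge> eps - ln r \<and> p * L / 2 \<ge> ln r + eps
      \<and> 2 * p / L < ln (1 + r * (1 - exp (- eps)))
      \<and> p * (ln (ln L) + 2) / ln L \<le> eps / 2
      \<and> exp (- (p * L)) \<le> r * (exp (eps / 2) - 1)"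
  shows "ereal (p * (ln (1 / eta) + ln (ln (ln (1 / eta)))) + ln ((1 - q) / q) - eps) \<le> Tstar q p eta
       \<and> Tstar q p eta \<le> ereal (p * (ln (1 / eta) + ln (ln (ln (1 / eta)))) + ln ((1 - q) / q) + eps)"
proof -
  have r: "r > 0" using q r_def by simp
  have rq: "1 / q = 1 + r" using q r_def by (simp add: field_simps)
  have L1: "L > 1" and l4: "ln L \<ge> 4" and big: "ln (ln L) + 2 * ln L \<le> sqrt L / 2"
    and a2: "ln (ln L) \<le> L / 2" and a3: "p * L / 2 \<ge> eps - ln r" and a4: "p * L / 2 \<ge> ln r + eps"
    and a5: "2 * p / L < ln (1 + r * (1 - exp (- eps)))"
    and a6: "p * (ln (ln L) + 2) / ln L \<le> eps / 2"
    and a7: "exp (- (p * L)) \<le> r * (exp (eps / 2) - 1)" using C by auto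
  have lnl0: "ln (ln L) \<ge> 0" using l4 by simp
  have etap: "eta powr p = exp (- (p * L))" using eta L_def by (simp add: powr_def ln_div)
  have pll: "p * ln (ln L) \<le> p * L / 2" using a2 p by (simp add: mult_left_mono)
  define T where "T = p * L + p * ln (ln L) + ln r - eps"
  have pl0: "p * ln (ln L) \<ge> 0" using lnl0 p by simp
  have pL0: "p * L > 0" using p L1 by simp
  have TL: "T \<ge> p * L / 2" using a3 pl0 T_def by linarith
  have T2: "T \<le> 2 * p * L" using pll a4 e T_def by linarith
  have Tpos: "T > 0" using TL pL0 by linarith
  have expT: "exp (T / L^2) < 1 + r * (1 - exp (- eps))"
  proof -
    have "T / L^2 \<le> (2 * p * L) / L^2" using T2 L1 by (intro divide_right_mono) auto
    also have "\<dots> = 2 * p / L" using L1 by (simp add: power2_eq_square)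
    finally have "T / L^2 < ln (1 + r * (1 - exp (- eps)))" using a5 by linarith
    then have "exp (T / L^2) < exp (ln (1 + r * (1 - exp (- eps))))" by simp
    also have "\<dots> = 1 + r * (1 - exp (- eps))" using r e by (simp add: add_pos_nonneg)
    finally show ?thesis .
  qed
  have low: "ereal T \<le> Tstar q p eta"
    unfolding Tstar_def
  proof (rule INF_greatest)
    fix G assume "G \<in> Gclass p eta"
    then obtain F where G: "G = mixE F" and D: "distr_on_1_inf F"
      and mom: "(\<integral>\<^sup>+ \<mu>. ennreal (ln \<mu> powr p) \<partial>F) \<le> ennreal (eta powr p)"
      unfolding Gclass_def by auto
    show "ereal T \<le> Tq q G" unfolding Tq_def
    proof (rule Inf_greatest)
      fix y assume "y \<in> {ereal t |t. 0 \<le> t \<and> (1 / q) * (1 - Eexp t) \<le> 1 - G t}"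
      then obtain t where y: "y = ereal t" and t0: "0 \<le> t" and cond: "(1 / q) * (1 - Eexp t) \<le> 1 - G t"
        by auto
      show "ereal T \<le> y"
      proof (rule ccontr)
        assume "\<not> ereal T \<le> y"
        then have tT: "t \<le> T" using y by simp
        have B0: "0 \<le> r * exp (- eps) * exp (p * L)" using r by simp
        have "1 - mixE F t \<le> exp (- t) * (exp (T / L^2) + r * exp (- eps) * exp (p * L) * eta powr p)"
        proof (rule lower_measure[OF D mom B0 t0])
          fix \<mu> :: real assume "\<mu> \<ge> 1"
          then show "exp (t - t / \<mu>) \<le> exp (T / L^2) + r * exp (- eps) * exp (p * L) * ln \<mu> powr p"
            using lower_pointwise[OF p L1 l4 TL big r T_def t0 tT] by simp
        qed
        also have "r * exp (- eps) * exp (p * L) * eta powr p = r * exp (- eps)"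
          unfolding etap by (simp add: mult.assoc flip: exp_add)
        also have "exp (- t) * (exp (T / L^2) + r * exp (- eps)) < exp (- t) * (1 + r)"
          using expT by (intro mult_strict_left_mono) (auto simp: algebra_simps)
        also have "exp (- t) * (1 + r) = (1 / q) * (1 - Eexp t)" using rq by (simp add: Eexp_def)
        finally show False using cond G by simp
      qed
    qed
  qed
  define t where "t = p * L + p * ln (ln L) + ln r + eps"
  define x where "x = ln L + ln (ln L)"
  define M where "M = exp x"
  define w where "w = exp (- (p * L)) / x powr p"
  have t2: "t \<le> 2 * p * L" using pll a4 t_def by linarith
  have t0: "t \<ge> 0" using a3 a4 pl0 pL0 t_def e by linarith
  have x1: "x \<ge> 1" using l4 lnl0 x_def by linarith
  have M1: "M \<ge> 1" using x1 M_def by simp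
  have xp1: "x powr p \<ge> 1" using x1 p by (simp add: ge_one_powr_ge_zero)
  have w0: "0 \<le> w" using w_def by simp
  have w1: "w \<le> 1"
  proof -
    have "exp (- (p * L)) \<le> 1" using p L1 by simp
    then have "exp (- (p * L)) \<le> x powr p" using xp1 by linarith
    then show ?thesis unfolding w_def using xp1 by (simp add: divide_le_eq)
  qed
  have ur: "w * (exp (t - t * exp (- x)) - 1) \<ge> r"
    unfolding w_def x_def using upper_real[OF p r e _ L1 t_def t2 a6 a7] l4 by simp
  define F where "F = distr (measure_pmf (bernoulli_pmf w)) borel (\<lambda>b. if b then M else 1)"
  note um = upper_measure[OF w0 w1 M1 p, folded F_def]
  have lnM: "ln M = x" using M_def by simp
  have wx: "w * x powr p = exp (- (p * L))" using w_def xp1 x1 by simp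
  have Gin: "mixE F \<in> Gclass p eta" unfolding Gclass_def
    using um(1) um(2) lnM wx etap by auto
  have condt: "1 / q * (1 - Eexp t) \<le> 1 - mixE F t"
  proof -
    have emx: "exp (- x) = 1 / M" using M_def by (simp add: exp_minus inverse_eq_divide)
    have "r * exp (- t) \<le> w * (exp (t - t * exp (- x)) - 1) * exp (- t)"
      using ur by (simp add: mult_right_mono)
    also have "\<dots> = w * (exp (- t / M) - exp (- t))"
      using emx by (simp add: algebra_simps flip: exp_add)
    finally have "r * exp (- t) \<le> w * (exp (- t / M) - exp (- t))" .
    then show "1 / q * (1 - Eexp t) \<le> 1 - mixE F t"
      using um(3)[of t] rq by (simp add: Eexp_def algebra_simps)
  qed
  have "Tq q (mixE F) \<le> ereal t" unfolding Tq_def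
    by (rule Inf_lower) (use t0 condt in auto)
  then have up: "Tstar q p eta \<le> ereal t"
    unfolding Tstar_def using Gin by (meson INF_lower order_trans)
  have cT: "p * (ln (1 / eta) + ln (ln (ln (1 / eta)))) + ln ((1 - q) / q) - eps = T"
    unfolding T_def L_def r_def by (simp add: algebra_simps)
  have ct: "p * (ln (1 / eta) + ln (ln (ln (1 / eta)))) + ln ((1 - q) / q) + eps = t"
    unfolding t_def L_def r_def by (simp add: algebra_simps)
  show ?thesis unfolding cT ct using low up by simp
qed



lemma ereal_sub_bounds:
  fixes X :: ereal and c e :: real
  assumes "ereal (c - e) \<le> X" "X \<le> ereal (c + e)"
  shows "ereal (- e) \<le> X - ereal c \<and> X - ereal c \<le> ereal e"
  using assms by (cases X) auto

theorem lemma5p2: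
  fixes q p :: real
  assumes "0 < q" "q < 1" "0 < p" "p < 2"
  shows "((\<lambda>\<eta>. Tstar q p \<eta> - ereal (p * (ln (1 / \<eta>) + ln (ln (ln (1 / \<eta>))))
                                  + ln ((1 - q) / q)))
          \<longlongrightarrow> 0) (at_right 0)"
proof -
  have r: "(1 - q) / q > 0" using assms by simp
  have key: "eventually (\<lambda>\<eta>. ereal (- eps) \<le> Tstar q p \<eta> - ereal (p * (ln (1 / \<eta>) + ln (ln (ln (1 / \<eta>))))
                                  + ln ((1 - q) / q))
        \<and> Tstar q p \<eta> - ereal (p * (ln (1 / \<eta>) + ln (ln (ln (1 / \<eta>))))
                                  + ln ((1 - q) / q)) \<le> ereal eps) (at_right 0)" if e: "eps > 0" for eps
  proof -
    note ev2 = filterlim_iff[THEN iffD1, OF asym4, rule_format, OF ev_conds[OF assms(3) r e]]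
    show ?thesis using ev2 eventually_at_right_less[of "0::real"]
    proof eventually_elim
      case (elim \<eta>)
      note bb = bounds[OF assms(1,2,3) e elim(2) elim(1)]
      show ?case by (rule ereal_sub_bounds) (use bb in auto)
    qed
  qed
  show ?thesis
  proof (rule order_tendstoI)
    fix a :: ereal assume a: "a < 0"
    obtain eps where e: "eps > 0" and ae: "a < ereal (- eps)"
    proof (cases a)
      case (real a')
      then show ?thesis using a that[of "- a' / 2"] by simp
    next
      case PInf then show ?thesis using a by simp
    next
      case MInf then show ?thesis using that[of 1] by simp
    qed
    show "eventually (\<lambda>\<eta>. a < Tstar q p \<eta> - ereal (p * (ln (1 / \<eta>) + ln (ln (ln (1 / \<eta>))))
                                  + ln ((1 - q) / q))) (at_right 0)"
      using key[OF e] by eventually_elim (use ae in auto)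
  next
    fix b :: ereal assume b: "b > 0"
    obtain eps where e: "eps > 0" and be: "ereal eps < b"
    proof (cases b)
      case (real b')
      then show ?thesis using b that[of "b' / 2"] by simp
    next
      case PInf then show ?thesis using that[of 1] by simp
    next
      case MInf then show ?thesis using b by simp
    qed
    show "eventually (\<lambda>\<eta>. Tstar q p \<eta> - ereal (p * (ln (1 / \<eta>) + ln (ln (ln (1 / \<eta>))))
                                  + ln ((1 - q) / q)) < b) (at_right 0)"
      using key[OF e] by eventually_elim (use be in auto)
  qed
qed


end
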